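(* Let $H_0$ be a Hermitian operator on a finite-dimensional Hilbert space with ground-space projection $P_0$, $Q_0=I-P_0$, ground energy $E_0$, $G=Q_0(E_0I-H_0)^{-1}Q_0$, and $V$ Hermitian. Then $V_{\mathrm{od}}\in\Gamma^\star(1)$, $S_n\in\Gamma^\star(n)$ for every $n\in\mathbb{N}$, and $\hat S^k(V_{\mathrm{od}})_m\in\Gamma(m+1)$ for all $k,m$.
   Context: $\Gamma(n)$ is the linear span of operators $Z_0VZ_1V\cdots Z_{n-1}VZ_n$ ($n$ factors of $V$) with each $Z_j\in\{P_0,Q_0\}\cup\{G^m:m\in\mathbb{N}\}$; $\Gamma^\star(n)\subseteq\Gamma(n)$ is the span of such products that additionally satisfy $Z_0Z_n=Z_nZ_0=0$. Set $V_{\mathrm d}=P_0VP_0+Q_0VQ_0$, $V_{\mathrm{od}}=P_0VQ_0+Q_0VP_0$, $\mathcal{L}(X)=P_0XG-GXP_0$, $\mathrm{ad}_S(X)=[S,X]$, $a_m=2^m\beta_m/m!$ with $\beta_m$ the Bernoulli numbers. Define $S_1=\mathcal{L}(V_{\mathrm{od}})$, $S_2=-\mathcal{L}(\mathrm{ad}_{V_{\mathrm d}}(S_1))$, and for $n\ge3$, $S_n=-\mathcal{L}(\mathrm{ad}_{V_{\mathrm d}}(S_{n-1}))+\sum_{j\ge1}a_{2j}\mathcal{L}(\hat S^{2j}(V_{\mathrm{od}})_{n-1})$, where $\hat S^k(V_{\mathrm{od}})_m=\sum_{n_1,\dots,n_k\ge1,\ \sum_r n_r=m}\mathrm{ad}_{S_{n_1}}\cdots\mathrm{ad}_{S_{n_k}}(V_{\mathrm{od}})$.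 *)

theory Defs
  imports "HOL-Analysis.Analysis"
begin

text \<open>Operators on the finite-dimensional Hilbert space complex^'n are the
  matrices complex^'n^'n (matrix product **, identity mat 1).\<close>

definition adj_mat :: "complex^'n^'n \<Rightarrow> complex^'n^'n" where
  "adj_mat A = (\<chi> i j. cnj (A $ j $ i))"

definition hermitian_mat :: "complex^'n^'n \<Rightarrow> bool" where
  "hermitian_mat A \<longleftrightarrow> adj_mat A = A"

definition cscale :: "complex \<Rightarrow> complex^'n^'n \<Rightarrow> complex^'n^'n" where
  "cscale c A = (\<chi> i j. c * A $ i $ j)"

definition cspan :: "(complex^'n^'n) set \<Rightarrow> (complex^'n^'n) set" where
  "cspan S = module.span cscale S"

definition mpow :: "complex^'n^'n \<Rightarrow> nat \<Rightarrow> complex^'n^'n" where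
  "mpow A m = (((**) A) ^^ m) (mat 1)"

text \<open>Bernoulli numbers: beta 0 = 1 and sum_{k=0}^{m} C(m+1,k) beta k = 0 for m \<ge> 1
  (convention beta 1 = -1/2; only even indices are used below).\<close>

fun bernoulli :: "nat \<Rightarrow> real" where
  "bernoulli n = (if n = 0 then 1 else
     - (\<Sum>k<n. real (Suc n choose k) * bernoulli k) / real (Suc n))"

declare bernoulli.simps [simp del]

definition a_coef :: "nat \<Rightarrow> real" where
  "a_coef m = 2 ^ m * bernoulli m / fact m"

definition Qop :: "complex^'n^'n \<Rightarrow> complex^'n^'n" where
  "Qop P0 = mat 1 - P0"

text \<open>Reduced resolvent G = Q0 (E0 I - H0)^{-1} Q0, i.e. the inverse of E0 I - H0
  on the range of Q0, extended by 0 on the ground space. Since H0 commutes with P0,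
  E0 I - H0 + P0 is invertible and Q0 (E0 I - H0 + P0)^{-1} Q0 is exactly that operator.\<close>

definition red_resolvent :: "real \<Rightarrow> complex^'n^'n \<Rightarrow> complex^'n^'n \<Rightarrow> complex^'n^'n" where
  "red_resolvent E0 H0 P0 =
     Qop P0 ** matrix_inv (mat (complex_of_real E0) - H0 + P0) ** Qop P0"

definition Vd :: "complex^'n^'n \<Rightarrow> complex^'n^'n \<Rightarrow> complex^'n^'n" where
  "Vd P0 V = P0 ** V ** P0 + Qop P0 ** V ** Qop P0"

definition Vod :: "complex^'n^'n \<Rightarrow> complex^'n^'n \<Rightarrow> complex^'n^'n" where
  "Vod P0 V = P0 ** V ** Qop P0 + Qop P0 ** V ** P0"

definition Lop :: "complex^'n^'n \<Rightarrow> complex^'n^'n \<Rightarrow> complex^'n^'n \<Rightarrow> complex^'n^'n" where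
  "Lop P0 G X = P0 ** X ** G - G ** X ** P0"

definition ad :: "complex^'n^'n \<Rightarrow> complex^'n^'n \<Rightarrow> complex^'n^'n" where
  "ad S X = S ** X - X ** S"

definition compositions :: "nat \<Rightarrow> nat \<Rightarrow> nat list set" where
  "compositions k m = {ns. length ns = k \<and> (\<forall>r\<in>set ns. 1 \<le> r) \<and> sum_list ns = m}"

definition hatS_gen :: "(nat \<Rightarrow> complex^'n^'n) \<Rightarrow> complex^'n^'n \<Rightarrow> nat \<Rightarrow> nat \<Rightarrow> complex^'n^'n" where
  "hatS_gen T X k m = (\<Sum>ns\<in>compositions k m. foldr (\<lambda>i Y. ad (T i) Y) ns X)"

text \<open>The generators S_n (n \<ge> 1; S_0 is an unused dummy). In the sum over j \<ge> 1 only
  j with 2j \<le> n-1 contribute (otherwise there are no compositions), so summing over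
  j \<in> {1..n-1} is the full sum.\<close>

function Sgen :: "complex^'n^'n \<Rightarrow> complex^'n^'n \<Rightarrow> complex^'n^'n \<Rightarrow> nat \<Rightarrow> complex^'n^'n" where
  "Sgen P0 G V n =
    (if n = 0 then 0
     else if n = 1 then Lop P0 G (Vod P0 V)
     else if n = 2 then - Lop P0 G (ad (Vd P0 V) (Sgen P0 G V 1))
     else - Lop P0 G (ad (Vd P0 V) (Sgen P0 G V (n - 1)))
          + (\<Sum>j\<in>{1..n-1}. cscale (complex_of_real (a_coef (2 * j)))
               (Lop P0 G (hatS_gen (\<lambda>i. if i < n then Sgen P0 G V i else 0)
                                   (Vod P0 V) (2 * j) (n - 1)))))"
  by pat_completeness auto
termination by (relation "Wellfounded.measure (\<lambda>(P0, G, V, n). n)") auto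

definition hatS :: "complex^'n^'n \<Rightarrow> complex^'n^'n \<Rightarrow> complex^'n^'n \<Rightarrow> nat \<Rightarrow> nat \<Rightarrow> complex^'n^'n" where
  "hatS P0 G V k m = hatS_gen (Sgen P0 G V) (Vod P0 V) k m"

fun vchain :: "complex^'n^'n \<Rightarrow> (complex^'n^'n) list \<Rightarrow> complex^'n^'n" where
  "vchain V [] = mat 1"
| "vchain V [Z] = Z"
| "vchain V (Z # Zs) = Z ** V ** vchain V Zs"

definition Zset :: "complex^'n^'n \<Rightarrow> complex^'n^'n \<Rightarrow> (complex^'n^'n) set" where
  "Zset P0 G = {P0, Qop P0} \<union> {mpow G m | m. m \<ge> 1}"

definition Gamma :: "complex^'n^'n \<Rightarrow> complex^'n^'n \<Rightarrow> complex^'n^'n \<Rightarrow> nat \<Rightarrow> (complex^'n^'n) set" where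
  "Gamma P0 G V n = cspan {vchain V Zs | Zs. length Zs = Suc n \<and> set Zs \<subseteq> Zset P0 G}"

definition Gamma_star :: "complex^'n^'n \<Rightarrow> complex^'n^'n \<Rightarrow> complex^'n^'n \<Rightarrow> nat \<Rightarrow> (complex^'n^'n) set" where
  "Gamma_star P0 G V n = cspan {vchain V Zs | Zs. length Zs = Suc n \<and> set Zs \<subseteq> Zset P0 G
        \<and> hd Zs ** last Zs = 0 \<and> last Zs ** hd Zs = 0}"

end

theory Submission
  imports Defs
begin

lemma cscale_module: "module (cscale :: complex \<Rightarrow> complex^'n^'n \<Rightarrow> complex^'n^'n)"
  by unfold_locales (auto simp: cscale_def vec_eq_iff algebra_simps)

interpretation cs: module "cscale :: complex \<Rightarrow> complex^'n^'n \<Rightarrow> complex^'n^'n"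
  by (rule cscale_module)

lemma mm_add_r: "((A::complex^'n^'n) + B) ** C = A ** C + B ** C"
  by (vector matrix_matrix_mult_def sum.distrib[symmetric] field_simps)
lemma mm_add_l: "(A::complex^'n^'n) ** (B + C) = A ** B + A ** C"
  by (rule matrix_add_ldistrib)
lemma mm_sub_r: "((A::complex^'n^'n) - B) ** C = A ** C - B ** C"
  by (vector matrix_matrix_mult_def sum_subtractf[symmetric] field_simps)
lemma mm_sub_l: "(A::complex^'n^'n) ** (B - C) = A ** B - A ** C"
  by (vector matrix_matrix_mult_def sum_subtractf[symmetric] field_simps)
lemma mm_sc_r: "cscale c (A::complex^'n^'n) ** C = cscale c (A ** C)"
  by (vector cscale_def matrix_matrix_mult_def sum_distrib_left field_simps)
lemma mm_sc_l: "(A::complex^'n^'n) ** cscale c C = cscale c (A ** C)"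
  by (vector cscale_def matrix_matrix_mult_def sum_distrib_left field_simps)

lemma span_linear_image:
  fixes f :: "complex^'n^'n \<Rightarrow> complex^'m^'m"
  assumes add: "\<And>x y. f (x + y) = f x + f y"
    and sc: "\<And>c x. f (cscale c x) = cscale c (f x)"
    and base: "\<And>x. x \<in> A \<Longrightarrow> f x \<in> cs.span C"
    and X: "X \<in> cs.span A"
  shows "f X \<in> cs.span C"
proof -
  have f0: "f 0 = 0" using add[of 0 0] by simp
  show ?thesis
    apply (rule cs.span_induct[OF X, where P="\<lambda>x. f x \<in> cs.span C", simplified])
     apply (rule cs.subspaceI) apply (auto simp: f0 add sc cs.span_zero cs.span_add cs.span_scale base)
    done
qed

lemma span_mult_closed:
  fixes X Y :: "complex^'n^'n"
  assumes "\<And>x y. x \<in> A \<Longrightarrow> y \<in> B \<Longrightarrow> x ** y \<in> cs.span C"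
    and "X \<in> cs.span A" "Y \<in> cs.span B"
  shows "X ** Y \<in> cs.span C"
proof -
  have "\<And>x. x \<in> A \<Longrightarrow> x ** Y \<in> cs.span C"
    by (rule span_linear_image[where f="\<lambda>y. _ ** y", OF _ _ _ assms(3)])
       (auto simp: mm_add_l mm_sc_l assms(1))
  then show ?thesis
    using span_linear_image[where f="\<lambda>x. x ** Y", OF _ _ _ assms(2)]
    by (auto simp: mm_add_r mm_sc_r)
qed

lemma mpow_Suc: "mpow G (Suc m) = G ** mpow G m"
  by (simp add: mpow_def)
lemma mpow_0: "mpow G 0 = mat 1"
  by (simp add: mpow_def)
lemma mpow_add: "mpow (G::complex^'n^'n) a ** mpow G b = mpow G (a + b)"
  by (induct a) (simp_all add: mpow_Suc mpow_0 matrix_mul_assoc[symmetric])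
lemma mpow_Suc': "mpow (G::complex^'n^'n) (Suc m) = mpow G m ** G"
  using mpow_add[of G m 1] by (simp add: mpow_Suc mpow_0)

lemma vchain_zero: "0 \<in> set Zs \<Longrightarrow> vchain V Zs = (0::complex^'n^'n)"
  by (induct V Zs rule: vchain.induct) auto

lemma vchain_cons: "Zs \<noteq> [] \<Longrightarrow> vchain V (Z # Zs) = Z ** V ** vchain V Zs"
  by (cases Zs) auto

lemma vchain_lmul: "A ** vchain V (Z # Zs) = vchain V ((A ** Z) # (Zs::(complex^'n^'n) list))"
  by (cases Zs) (auto simp: matrix_mul_assoc)

lemma vchain_rmul: "vchain V (Zs @ [Z]) ** B = vchain V (Zs @ [Z ** (B::complex^'n^'n)])"
proof (induct Zs)
  case Nil then show ?case by simp
next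
  case (Cons a Zs) then show ?case
    by (simp add: vchain_cons matrix_mul_assoc[symmetric])
qed

lemma vchain_append: "Xs \<noteq> [] \<Longrightarrow> Ys \<noteq> [] \<Longrightarrow>
   vchain V (Xs @ Ys) = vchain V Xs ** V ** vchain V (Ys::(complex^'n^'n) list)"
proof (induct Xs)
  case Nil then show ?case by simp
next
  case (Cons a Xs) then show ?case
    by (cases "Xs = []") (simp_all add: vchain_cons matrix_mul_assoc)
qed

lemma vchain_merge: "vchain V (Xs @ [a]) ** vchain V (b # Ys) = vchain V (Xs @ (a ** b) # (Ys::(complex^'n^'n) list))"
proof (cases "Xs = []")
  case True then show ?thesis by (simp add: vchain_lmul)
next
  case False
  have "vchain V (Xs @ [a]) = vchain V Xs ** V ** a" using False vchain_append[of Xs "[a]" V] by simp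
  then have "vchain V (Xs @ [a]) ** vchain V (b # Ys) = vchain V Xs ** V ** (a ** vchain V (b # Ys))"
    by (simp add: matrix_mul_assoc)
  also have "\<dots> = vchain V Xs ** V ** vchain V ((a ** b) # Ys)" by (simp add: vchain_lmul)
  also have "\<dots> = vchain V (Xs @ (a ** b) # Ys)" using False vchain_append[of Xs "(a**b) # Ys" V] by simp
  finally show ?thesis .
qed

lemma Qop_facts:
  fixes P0 M :: "complex^'n^'n"
  assumes idem: "P0 ** P0 = P0"
  shows "P0 ** Qop P0 = 0" "Qop P0 ** P0 = 0" "Qop P0 ** Qop P0 = Qop P0"
    "P0 ** (Qop P0 ** M ** Qop P0) = 0" "(Qop P0 ** M ** Qop P0) ** P0 = 0"
    "Qop P0 ** (Qop P0 ** M ** Qop P0) = Qop P0 ** M ** Qop P0"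
    "(Qop P0 ** M ** Qop P0) ** Qop P0 = Qop P0 ** M ** Qop P0"
proof -
  show 1: "P0 ** Qop P0 = 0" by (simp add: Qop_def mm_sub_l idem)
  show 2: "Qop P0 ** P0 = 0" by (simp add: Qop_def mm_sub_r idem)
  show 3: "Qop P0 ** Qop P0 = Qop P0" by (simp add: Qop_def mm_sub_r mm_sub_l idem)
  show "P0 ** (Qop P0 ** M ** Qop P0) = 0" by (simp add: matrix_mul_assoc 1)
  show "(Qop P0 ** M ** Qop P0) ** P0 = 0" by (simp add: matrix_mul_assoc[symmetric] 2)
  show "Qop P0 ** (Qop P0 ** M ** Qop P0) = Qop P0 ** M ** Qop P0" by (simp add: matrix_mul_assoc 3)
  show "(Qop P0 ** M ** Qop P0) ** Qop P0 = Qop P0 ** M ** Qop P0" by (simp add: matrix_mul_assoc[symmetric] 3)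
qed

declare Sgen.simps[simp del]

locale setting =
  fixes P0 G V :: "complex^'n^'n"
  assumes idem: "P0 ** P0 = P0"
    and PG: "P0 ** G = 0" and GP: "G ** P0 = 0" and QG: "Qop P0 ** G = G" and GQ: "G ** Qop P0 = G"
begin

abbreviation "Q \<equiv> Qop P0"

lemma PQ: "P0 ** Q = 0" and QP: "Q ** P0 = 0" and QQ: "Q ** Q = Q"
  using Qop_facts[OF idem] by auto

lemma Pmpow: "m \<ge> 1 \<Longrightarrow> P0 ** mpow G m = 0"
  by (cases m) (simp_all add: mpow_Suc matrix_mul_assoc PG)
lemma mpowP: "m \<ge> 1 \<Longrightarrow> mpow G m ** P0 = 0"
  by (cases m) (simp_all add: mpow_Suc' matrix_mul_assoc[symmetric] GP)
lemma Qmpow: "m \<ge> 1 \<Longrightarrow> Q ** mpow G m = mpow G m"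
  by (cases m) (simp_all add: mpow_Suc matrix_mul_assoc QG)
lemma mpowQ: "m \<ge> 1 \<Longrightarrow> mpow G m ** Q = mpow G m"
  by (cases m) (simp_all add: mpow_Suc' matrix_mul_assoc[symmetric] GQ)
lemma G_mpow: "G = mpow G 1" by (simp add: mpow_Suc mpow_0)

lemma Z_prod: "z1 \<in> Zset P0 G \<Longrightarrow> z2 \<in> Zset P0 G \<Longrightarrow> z1 ** z2 \<in> Zset P0 G \<or> z1 ** z2 = 0"
  unfolding Zset_def
  by (auto simp: idem PQ QP QQ Pmpow mpowP Qmpow mpowQ mpow_add)

definition "Gen n = {vchain V Zs | Zs. length Zs = Suc n \<and> set Zs \<subseteq> Zset P0 G}"
definition "GenS n = {vchain V Zs | Zs. length Zs = Suc n \<and> set Zs \<subseteq> Zset P0 G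
        \<and> hd Zs ** last Zs = 0 \<and> last Zs ** hd Zs = 0}"

lemma Gamma_eq: "Gamma P0 G V n = cs.span (Gen n)"
  by (simp add: Gamma_def cspan_def Gen_def)
lemma GammaS_eq: "Gamma_star P0 G V n = cs.span (GenS n)"
  by (simp add: Gamma_star_def cspan_def GenS_def)
lemma GammaS_sub: "Gamma_star P0 G V n \<subseteq> Gamma P0 G V n"
  unfolding Gamma_eq GammaS_eq by (rule cs.span_mono) (auto simp: Gen_def GenS_def)

lemma gen_prod:
  assumes x: "x \<in> Gen a" and y: "y \<in> Gen b"
  shows "x ** y \<in> Gamma P0 G V (a + b)"
proof -
  obtain Zs where Zs: "x = vchain V Zs" "length Zs = Suc a" "set Zs \<subseteq> Zset P0 G"
    using x by (auto simp: Gen_def)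
  obtain Ws where Ws: "y = vchain V Ws" "length Ws = Suc b" "set Ws \<subseteq> Zset P0 G"
    using y by (auto simp: Gen_def)
  obtain Xs z where Xz: "Zs = Xs @ [z]" using Zs(2) by (cases Zs rule: rev_exhaust) auto
  obtain w Ys where wY: "Ws = w # Ys" using Ws(2) by (cases Ws) auto
  have xy: "x ** y = vchain V (Xs @ (z ** w) # Ys)"
    using Zs(1) Ws(1) Xz wY vchain_merge by simp
  have zw: "z ** w \<in> Zset P0 G \<or> z ** w = 0"
    using Z_prod Zs(3) Ws(3) Xz wY by auto
  show ?thesis
  proof (cases "z ** w = 0")
    case True then show ?thesis using xy vchain_zero[of "Xs @ (z ** w) # Ys" V]
      by (simp add: Gamma_eq cs.span_zero)
  next
    case False
    then have "x ** y \<in> Gen (a + b)"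
      unfolding Gen_def using xy zw Zs Ws Xz wY
      by (intro CollectI exI[of _ "Xs @ (z ** w) # Ys"]) auto
    then show ?thesis unfolding Gamma_eq by (rule cs.span_base)
  qed
qed

lemma Gamma_mult: "X \<in> Gamma P0 G V a \<Longrightarrow> Y \<in> Gamma P0 G V b \<Longrightarrow> X ** Y \<in> Gamma P0 G V (a + b)"
  using span_mult_closed[of "Gen a" "Gen b" "Gen (a+b)" X Y] gen_prod
  by (simp add: Gamma_eq)

lemma Gamma_ad: "S \<in> Gamma P0 G V a \<Longrightarrow> X \<in> Gamma P0 G V b \<Longrightarrow> ad S X \<in> Gamma P0 G V (a + b)"
  unfolding ad_def
  using Gamma_mult[of S a X b] Gamma_mult[of X b S a]
  by (simp add: Gamma_eq cs.span_diff add.commute)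

lemma P_left: "z \<in> Zset P0 G \<Longrightarrow> P0 ** z = P0 \<or> P0 ** z = 0"
  unfolding Zset_def by (auto simp: idem PQ Pmpow)
lemma P_right: "z \<in> Zset P0 G \<Longrightarrow> z ** P0 = P0 \<or> z ** P0 = 0"
  unfolding Zset_def by (auto simp: idem QP mpowP)
lemma G_left: "z \<in> Zset P0 G \<Longrightarrow> G ** z = 0 \<or> (\<exists>k\<ge>1. G ** z = mpow G k)"
  unfolding Zset_def
  using G_mpow by (auto simp: GP GQ mpow_Suc[symmetric])
lemma G_right: "z \<in> Zset P0 G \<Longrightarrow> z ** G = 0 \<or> (\<exists>k\<ge>1. z ** G = mpow G k)"
  unfolding Zset_def
  using G_mpow by (auto simp: PG QG mpow_Suc'[symmetric])

lemma mpow_in: "k \<ge> 1 \<Longrightarrow> mpow G k \<in> Zset P0 G"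
  by (auto simp: Zset_def)
lemma P_in: "P0 \<in> Zset P0 G"
  by (auto simp: Zset_def)

lemma Lop_gen1:
  assumes n: "n \<ge> 1" and x: "x \<in> Gen n"
  shows "P0 ** x ** G \<in> Gamma_star P0 G V n"
proof -
  obtain Zs where Zs: "x = vchain V Zs" "length Zs = Suc n" "set Zs \<subseteq> Zset P0 G"
    using x by (auto simp: Gen_def)
  obtain z Rs where zR: "Zs = z # Rs" using Zs(2) by (cases Zs) auto
  obtain Ms w where Mw: "Rs = Ms @ [w]" using Zs(2) zR n by (cases Rs rule: rev_exhaust) auto
  have e: "P0 ** x ** G = vchain V (((P0 ** z) # Ms) @ [w ** G])"
    using Zs(1) zR Mw vchain_lmul[of P0 V z "Ms @ [w]"] vchain_rmul[of V "(P0 ** z) # Ms" w G]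
    by simp
  have zin: "z \<in> Zset P0 G" and win: "w \<in> Zset P0 G" and Msin: "set Ms \<subseteq> Zset P0 G"
    using Zs(3) zR Mw by auto
  show ?thesis
  proof (cases "P0 ** z = 0 \<or> w ** G = 0")
    case True then show ?thesis using e vchain_zero[of "((P0 ** z) # Ms) @ [w ** G]" V]
      by (auto simp: GammaS_eq cs.span_zero)
  next
    case False
    then have pz: "P0 ** z = P0" using P_left[OF zin] by auto
    obtain k where k: "k \<ge> 1" "w ** G = mpow G k" using G_right[OF win] False by auto
    have "P0 ** x ** G \<in> GenS n"
      unfolding GenS_def using e pz k Msin Zs(2) zR Mw Pmpow[of k] mpowP[of k] mpow_in[of k] P_in
      by (intro CollectI exI[of _ "((P0 ** z) # Ms) @ [w ** G]"]) auto
    then show ?thesis unfolding GammaS_eq by (rule cs.span_base)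
  qed
qed

lemma Lop_gen2:
  assumes n: "n \<ge> 1" and x: "x \<in> Gen n"
  shows "G ** x ** P0 \<in> Gamma_star P0 G V n"
proof -
  obtain Zs where Zs: "x = vchain V Zs" "length Zs = Suc n" "set Zs \<subseteq> Zset P0 G"
    using x by (auto simp: Gen_def)
  obtain z Rs where zR: "Zs = z # Rs" using Zs(2) by (cases Zs) auto
  obtain Ms w where Mw: "Rs = Ms @ [w]" using Zs(2) zR n by (cases Rs rule: rev_exhaust) auto
  have e: "G ** x ** P0 = vchain V (((G ** z) # Ms) @ [w ** P0])"
    using Zs(1) zR Mw vchain_lmul[of G V z "Ms @ [w]"] vchain_rmul[of V "(G ** z) # Ms" w P0]
    by simp
  have zin: "z \<in> Zset P0 G" and win: "w \<in> Zset P0 G" and Msin: "set Ms \<subseteq> Zset P0 G"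
    using Zs(3) zR Mw by auto
  show ?thesis
  proof (cases "G ** z = 0 \<or> w ** P0 = 0")
    case True then show ?thesis using e vchain_zero[of "((G ** z) # Ms) @ [w ** P0]" V]
      by (auto simp: GammaS_eq cs.span_zero)
  next
    case False
    then have pz: "w ** P0 = P0" using P_right[OF win] by auto
    obtain k where k: "k \<ge> 1" "G ** z = mpow G k" using G_left[OF zin] False by auto
    have "G ** x ** P0 \<in> GenS n"
      unfolding GenS_def using e pz k Msin Zs(2) zR Mw Pmpow[of k] mpowP[of k] mpow_in[of k] P_in
      by (intro CollectI exI[of _ "((G ** z) # Ms) @ [w ** P0]"]) auto
    then show ?thesis unfolding GammaS_eq by (rule cs.span_base)
  qed
qed

lemma Lop_Gamma:
  assumes n: "n \<ge> 1" and X: "X \<in> Gamma P0 G V n"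
  shows "Lop P0 G X \<in> Gamma_star P0 G V n"
proof -
  have "Lop P0 G X \<in> cs.span (GenS n)"
    apply (rule span_linear_image[where f="Lop P0 G", OF _ _ _ X[unfolded Gamma_eq]])
      apply (simp add: Lop_def mm_add_l mm_add_r algebra_simps)
     apply (simp add: Lop_def mm_sc_l mm_sc_r cs.scale_right_diff_distrib)
    using Lop_gen1[OF n] Lop_gen2[OF n] by (auto simp: Lop_def GammaS_eq cs.span_diff)
  then show ?thesis by (simp add: GammaS_eq)
qed


lemma Q_in: "Q \<in> Zset P0 G"
  by (auto simp: Zset_def)

lemma Vod_star: "Vod P0 V \<in> Gamma_star P0 G V 1"
proof -
  have a: "vchain V [P0, Q] \<in> GenS 1"
    unfolding GenS_def using P_in Q_in PQ QP
    by (intro CollectI exI[of _ "[P0, Q]"]) auto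
  have b: "vchain V [Q, P0] \<in> GenS 1"
    unfolding GenS_def using P_in Q_in PQ QP
    by (intro CollectI exI[of _ "[Q, P0]"]) auto
  have "vchain V [P0, Q] + vchain V [Q, P0] \<in> cs.span (GenS 1)"
    by (rule cs.span_add[OF cs.span_base[OF a] cs.span_base[OF b]])
  then show ?thesis by (simp add: GammaS_eq Vod_def)
qed

lemma Vod_Gamma: "Vod P0 V \<in> Gamma P0 G V 1"
  using Vod_star GammaS_sub by auto

lemma Vd_Gamma: "Vd P0 V \<in> Gamma P0 G V 1"
proof -
  have a: "vchain V [P0, P0] \<in> Gen 1"
    unfolding Gen_def using P_in Q_in
    by (intro CollectI exI[of _ "[P0, P0]"]) auto
  have b: "vchain V [Q, Q] \<in> Gen 1"
    unfolding Gen_def using P_in Q_in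
    by (intro CollectI exI[of _ "[Q, Q]"]) auto
  have "vchain V [P0, P0] + vchain V [Q, Q] \<in> cs.span (Gen 1)"
    by (rule cs.span_add[OF cs.span_base[OF a] cs.span_base[OF b]])
  then show ?thesis by (simp add: Gamma_eq Vd_def)
qed

lemma hatS_gen_Gamma:
  assumes T: "\<And>i. i \<ge> 1 \<Longrightarrow> T i \<in> Gamma P0 G V i"
    and X: "X \<in> Gamma P0 G V 1"
  shows "hatS_gen T X k m \<in> Gamma P0 G V (m + 1)"
proof -
  have fold: "(\<forall>r\<in>set ns. 1 \<le> r) \<Longrightarrow> foldr (\<lambda>i Y. ad (T i) Y) ns X \<in> Gamma P0 G V (sum_list ns + 1)" for ns
  proof (induct ns)
    case Nil then show ?case using X by simp
  next
    case (Cons i ns)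
    have f: "foldr (\<lambda>i Y. ad (T i) Y) ns X \<in> Gamma P0 G V (sum_list ns + 1)"
      using Cons by auto
    have t: "T i \<in> Gamma P0 G V i" using Cons(2) T by auto
    have "ad (T i) (foldr (\<lambda>i Y. ad (T i) Y) ns X) \<in> Gamma P0 G V (i + (sum_list ns + 1))"
      by (rule Gamma_ad[OF t f])
    then show ?case by (simp add: add.assoc)
  qed
  show ?thesis unfolding hatS_gen_def
    using fold unfolding Gamma_eq
    by (intro cs.span_sum) (auto simp: compositions_def)
qed

lemma Sgen_star: "n \<ge> 1 \<Longrightarrow> Sgen P0 G V n \<in> Gamma_star P0 G V n"
proof (induct n rule: less_induct)
  case (less n)
  have IH: "\<And>i. 1 \<le> i \<Longrightarrow> i < n \<Longrightarrow> Sgen P0 G V i \<in> Gamma P0 G V i"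
    using less GammaS_sub by blast
  consider "n = 1" | "n = 2" | "n \<ge> 3" using less(2) by linarith
  then show ?case
  proof cases
    case 1 then show ?thesis
      using Lop_Gamma[OF _ Vod_Gamma] by (subst Sgen.simps) simp
  next
    case 2
    have h: "ad (Vd P0 V) (Sgen P0 G V 1) \<in> Gamma P0 G V (1 + 1)"
      by (rule Gamma_ad[OF Vd_Gamma IH[of 1]]) (use 2 in auto)
    have "ad (Vd P0 V) (Sgen P0 G V 1) \<in> Gamma P0 G V 2"
      using h by (simp only: one_add_one)
    then have "Lop P0 G (ad (Vd P0 V) (Sgen P0 G V 1)) \<in> Gamma_star P0 G V 2"
      using Lop_Gamma[of 2] by simp
    then show ?thesis using 2 by (subst Sgen.simps) (simp add: GammaS_eq cs.span_neg)
  next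
    case 3
    have "ad (Vd P0 V) (Sgen P0 G V (n - 1)) \<in> Gamma P0 G V (1 + (n - 1))"
      using Gamma_ad[OF Vd_Gamma IH[of "n - 1"]] 3 by simp
    then have A: "Lop P0 G (ad (Vd P0 V) (Sgen P0 G V (n - 1))) \<in> Gamma_star P0 G V n"
      using Lop_Gamma[of n] 3 by simp
    have T: "\<And>i. 1 \<le> i \<Longrightarrow> (if i < n then Sgen P0 G V i else 0) \<in> Gamma P0 G V i"
      using IH by (auto simp: Gamma_eq cs.span_zero)
    have B: "Lop P0 G (hatS_gen (\<lambda>i. if i < n then Sgen P0 G V i else 0) (Vod P0 V) (2 * j) (n - 1))
       \<in> Gamma_star P0 G V n" for j
      using hatS_gen_Gamma[OF T Vod_Gamma, of "2 * j" "n - 1"] 3 Lop_Gamma[of n] by simp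
    have C: "(\<Sum>j\<in>{1..n-1}. cscale (complex_of_real (a_coef (2 * j)))
               (Lop P0 G (hatS_gen (\<lambda>i. if i < n then Sgen P0 G V i else 0)
                                   (Vod P0 V) (2 * j) (n - 1)))) \<in> Gamma_star P0 G V n"
      unfolding GammaS_eq by (intro cs.span_sum cs.span_scale) (use B in \<open>simp add: GammaS_eq\<close>)
    have D: "- Lop P0 G (ad (Vd P0 V) (Sgen P0 G V (n - 1))) \<in> Gamma_star P0 G V n"
      using A unfolding GammaS_eq by (rule cs.span_neg)
    have "Sgen P0 G V n = - Lop P0 G (ad (Vd P0 V) (Sgen P0 G V (n - 1)))
          + (\<Sum>j\<in>{1..n-1}. cscale (complex_of_real (a_coef (2 * j)))
               (Lop P0 G (hatS_gen (\<lambda>i. if i < n then Sgen P0 G V i else 0)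
                                   (Vod P0 V) (2 * j) (n - 1))))"
      using 3 by (subst Sgen.simps) simp
    then show ?thesis using cs.span_add[OF D[unfolded GammaS_eq] C[unfolded GammaS_eq]]
      by (simp only: GammaS_eq)
  qed
qed

lemma hatS_Gamma: "hatS P0 G V k m \<in> Gamma P0 G V (m + 1)"
  unfolding hatS_def
  by (rule hatS_gen_Gamma[OF _ Vod_Gamma]) (use Sgen_star GammaS_sub in blast)


end

theorem lemma3:
  fixes H0 V P0 :: "complex^'n^'n" and E0 :: real
  assumes herm_H0: "hermitian_mat H0"
    and herm_V: "hermitian_mat V"
    and E0_eig: "\<exists>x. x \<noteq> 0 \<and> H0 *v x = complex_of_real E0 *s x"
    and E0_min: "\<forall>(c::complex) x. x \<noteq> 0 \<and> H0 *v x = c *s x \<longrightarrow> E0 \<le> Re c"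
    and P0_herm: "hermitian_mat P0"
    and P0_idem: "P0 ** P0 = P0"
    and P0_range: "range ((*v) P0) = {x. H0 *v x = complex_of_real E0 *s x}"
  shows "Vod P0 V \<in> Gamma_star P0 (red_resolvent E0 H0 P0) V 1
    \<and> (\<forall>n\<ge>1. Sgen P0 (red_resolvent E0 H0 P0) V n \<in> Gamma_star P0 (red_resolvent E0 H0 P0) V n)
    \<and> (\<forall>k m. hatS P0 (red_resolvent E0 H0 P0) V k m \<in> Gamma P0 (red_resolvent E0 H0 P0) V (m + 1))"
proof -
  let ?M = "matrix_inv (mat (complex_of_real E0) - H0 + P0)"
  interpret setting P0 "red_resolvent E0 H0 P0" V
  proof (rule setting.intro)
    show "P0 ** P0 = P0" by (rule P0_idem)
    show "P0 ** red_resolvent E0 H0 P0 = 0"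
      unfolding red_resolvent_def by (rule Qop_facts(4)[OF P0_idem])
    show "red_resolvent E0 H0 P0 ** P0 = 0"
      unfolding red_resolvent_def by (rule Qop_facts(5)[OF P0_idem])
    show "Qop P0 ** red_resolvent E0 H0 P0 = red_resolvent E0 H0 P0"
      unfolding red_resolvent_def by (rule Qop_facts(6)[OF P0_idem])
    show "red_resolvent E0 H0 P0 ** Qop P0 = red_resolvent E0 H0 P0"
      unfolding red_resolvent_def by (rule Qop_facts(7)[OF P0_idem])
  qed
  show ?thesis using Vod_star Sgen_star hatS_Gamma by blast
qed

end
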